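(* Let $p$ be an odd prime and $b,c\in\mathbb Z$ with $p\nmid c(b^2-4c)$. For integers $k$ set $$U(k)=\binom{p-2}{k}_{b,c}+c^{p-1-k}\binom{p-2}{p-1-k}_{b,c}$$ (for $1\le k\le p-2$), and let $D_p(b,c)=\det\left[(i^2+bij+cj^2)^{p-2}\right]_{1\le i,j\le p-1}$. (i) If $U(k)\equiv 0\pmod p$ for some $k\in\{2,\ldots,p-2\}$, then $\left(\frac{D_p(b,c)}{p}\right)=0$. (ii) If $U(k)\not\equiv 0\pmod p$ for all $2\le k\le p-2$, then $$\left(\frac cp\right)^{(p-1)(p-3)/8}\left(\frac{D_p(b,c)}{p}\right)=\left(\frac{4c-b^2+2c\left(\frac{b^2-4c}{p}\right)}{p}\right)\left(\frac{2c\,u_{p-1}(-b,c)-b}{p}\right)\left(\frac{U(p-2)\,U(\frac{p-1}{2})}{p}\right).$$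
   Context: $\left(\frac{\cdot}{p}\right)$ is the Legendre symbol modulo $p$. For $n\in\mathbb N$ and $b,c\in\mathbb Z$, the generalized trinomial coefficients $\binom{n}{k}_{b,c}$ ($k\in\mathbb Z$) are the integers defined by $\left(x+b+\frac{c}{x}\right)^n=\sum_{k\in\mathbb Z}\binom{n}{k}_{b,c}x^k$. For $A,B\in\mathbb Z$, the Lucas sequence $u_n=u_n(A,B)$ is defined by $u_0=0$, $u_1=1$, $u_{n+1}=Au_n-Bu_{n-1}$ for $n\ge1$. *)

theory Defs
  imports "Jordan_Normal_Form.Determinant" "HOL-Number_Theory.Number_Theory"
    "HOL-Computational_Algebra.Polynomial"
begin

text \<open>Generalized trinomial coefficient: coefficient of x^k in (x + b + c/x)^n.
  Since x^n (x + b + c/x)^n = (x^2 + b x + c)^n, it is the coefficient of x^(n+k)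
  in (x^2+bx+c)^n (and 0 if n+k<0).\<close>
definition trinom :: "nat \<Rightarrow> int \<Rightarrow> int \<Rightarrow> int \<Rightarrow> int" where
  "trinom n k b c = (if int n + k < 0 then 0
     else Polynomial.coeff ([:c, b, 1:] ^ n) (nat (int n + k)))"

fun lucas_u :: "int \<Rightarrow> int \<Rightarrow> nat \<Rightarrow> int" where
  "lucas_u A B 0 = 0"
| "lucas_u A B (Suc 0) = 1"
| "lucas_u A B (Suc (Suc n)) = A * lucas_u A B (Suc n) - B * lucas_u A B n"

definition U_fun :: "nat \<Rightarrow> int \<Rightarrow> int \<Rightarrow> nat \<Rightarrow> int" where
  "U_fun p b c k = trinom (p - 2) (int k) b c
      + c ^ (p - 1 - k) * trinom (p - 2) (int (p - 1 - k)) b c"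

definition D_det :: "nat \<Rightarrow> int \<Rightarrow> int \<Rightarrow> int" where
  "D_det p b c = det (mat (p - 1) (p - 1)
     (\<lambda>(i, j). (int (i+1)^2 + b * int (i+1) * int (j+1) + c * int (j+1)^2) ^ (p - 2)))"

end

theory Submission
  imports Defs
begin



lemma Leg_values: "Legendre a m \<in> {-1,0,1}"
  by (auto simp: Legendre_def)

lemma Leg_cong:
  assumes "[a = b] (mod m)" shows "Legendre a m = Legendre b m"
proof -
  have z: "[a = 0] (mod m) \<longleftrightarrow> [b = 0] (mod m)"
    using assms cong_sym cong_trans by blast
  have q: "QuadRes m a \<longleftrightarrow> QuadRes m b"
    unfolding QuadRes_def using assms cong_sym cong_trans by blast
  show ?thesis unfolding Legendre_def using z q by simp
qed

lemma small_cong_eq: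
  fixes x y m :: int
  assumes "x \<in> {-1,0,1}" "y \<in> {-1,0,1}" "m > 2" "[x = y] (mod m)"
  shows "x = y"
proof -
  have "m dvd (x - y)" using assms(4) by (simp add: cong_iff_dvd_diff)
  moreover have "\<bar>x - y\<bar> < m" using assms(1-3) by auto
  ultimately show ?thesis
  proof (cases "x - y = 0")
    case False
    assume d: "m dvd x - y" and l: "\<bar>x - y\<bar> < m"
    have "\<bar>m\<bar> \<le> \<bar>x - y\<bar>" by (rule dvd_imp_le_int[OF False d])
    with l show ?thesis by simp
  qed simp
qed

lemma Leg_mult:
  assumes "prime p" "p > 2"
  shows "Legendre (a*b) (int p) = Legendre a (int p) * Legendre b (int p)"
proof (rule small_cong_eq)
  show "Legendre (a*b) p \<in> {-1,0,1}" by (rule Leg_values)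
  show "Legendre a p * Legendre b p \<in> {-1,0,1}" using Leg_values[of a p] Leg_values[of b p] by auto
  show "int p > 2" using assms by simp
  have A: "[Legendre (a*b) p = (a*b)^((p-1) div 2)] (mod p)" using euler_criterion[OF assms] .
  have B: "[Legendre a p * Legendre b p = a^((p-1) div 2) * b^((p-1) div 2)] (mod p)"
    using euler_criterion[OF assms, of a] euler_criterion[OF assms, of b] by (intro cong_mult)
  show "[Legendre (a*b) p = Legendre a p * Legendre b p] (mod p)"
    by (rule cong_trans[OF A]) (use B in \<open>simp add: power_mult_distrib cong_sym_eq\<close>)
qed

lemma Leg_zero_iff: "Legendre a m = 0 \<longleftrightarrow> [a = 0] (mod m)"
  by (auto simp: Legendre_def)

lemma Leg_sq_nz: "\<not> [a = 0] (mod m) \<Longrightarrow> Legendre a m * Legendre a m = 1"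
  by (auto simp: Legendre_def)

lemma Leg_sq_nz': "\<not> [a = 0] (mod m) \<Longrightarrow> Legendre a m ^ 2 = 1"
  by (auto simp: Legendre_def)

definition Gsum :: "int \<Rightarrow> nat \<Rightarrow> (nat \<Rightarrow> int) \<Rightarrow> int" where
  "Gsum A n f = (\<Sum>j\<le>n. int (n choose j) * A^(n-j) * f j)"

lemma Gsum_Suc: "Gsum A (Suc n) f = A * Gsum A n f + Gsum A n (\<lambda>j. f (Suc j))"
proof -
  have "Gsum A (Suc n) f = int (Suc n choose 0) * A^(Suc n) * f 0
       + (\<Sum>j\<le>n. int (Suc n choose Suc j) * A^(Suc n - Suc j) * f (Suc j))"
    unfolding Gsum_def by (subst sum.atMost_Suc_shift) simp
  also have "(\<Sum>j\<le>n. int (Suc n choose Suc j) * A^(Suc n - Suc j) * f (Suc j))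
     = (\<Sum>j\<le>n. int (n choose j) * A^(n - j) * f (Suc j))
     + (\<Sum>j\<le>n. int (n choose Suc j) * A^(n - j) * f (Suc j))"
    by (simp add: sum.distrib[symmetric] algebra_simps)
  also have "(\<Sum>j\<le>n. int (n choose Suc j) * A^(n - j) * f (Suc j))
      = (\<Sum>j\<le>Suc n. int (n choose j) * A^(Suc n - j) * f j) - A^(Suc n) * f 0"
    by (subst sum.atMost_Suc_shift) simp
  also have "(\<Sum>j\<le>Suc n. int (n choose j) * A^(Suc n - j) * f j)
      = (\<Sum>j\<le>n. int (n choose j) * A^(Suc n - j) * f j)"
    by (simp)
  also have "\<dots> = A * Gsum A n f"
    unfolding Gsum_def sum_distrib_left
    by (rule sum.cong) (auto simp: Suc_diff_le)
  finally show ?thesis unfolding Gsum_def by simp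
qed

definition wo :: "int \<Rightarrow> nat \<Rightarrow> int" where "wo D j = (if odd j then D^(j div 2) else 0)"
definition we :: "int \<Rightarrow> nat \<Rightarrow> int" where "we D j = (if even j then D^(j div 2) else 0)"

lemma wo_Suc: "wo D (Suc j) = we D j" by (auto simp: wo_def we_def elim: oddE)
lemma we_Suc: "we D (Suc j) = D * wo D j"
  by (auto simp: wo_def we_def elim: oddE)

definition Sl :: "int \<Rightarrow> int \<Rightarrow> nat \<Rightarrow> int" where "Sl A D n = Gsum A n (wo D)"
definition Cl :: "int \<Rightarrow> int \<Rightarrow> nat \<Rightarrow> int" where "Cl A D n = Gsum A n (we D)"

lemma Sl_Suc: "Sl A D (Suc n) = A * Sl A D n + Cl A D n"
  unfolding Sl_def Cl_def Gsum_Suc wo_Suc by simp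

lemma Cl_Suc: "Cl A D (Suc n) = A * Cl A D n + D * Sl A D n"
proof -
  have "Gsum A n (\<lambda>j. D * wo D j) = D * Gsum A n (wo D)"
    unfolding Gsum_def sum_distrib_left by (rule sum.cong) auto
  thus ?thesis unfolding Sl_def Cl_def Gsum_Suc we_Suc by simp
qed

lemma lucas_binom:
  "2 * Sl A (A^2 - 4*B) n = 2^n * lucas_u A B n \<and>
   2 * Cl A (A^2 - 4*B) n = 2^n * (2 * lucas_u A B (Suc n) - A * lucas_u A B n)"
proof (induction n)
  case 0
  then show ?case by (simp add: Sl_def Cl_def Gsum_def wo_def we_def)
next
  case (Suc n)
  have e1: "2 * Sl A (A^2 - 4*B) (Suc n) = 2^(Suc n) * lucas_u A B (Suc n)"
    using Suc.IH unfolding Sl_Suc by (simp add: algebra_simps)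
  have e2: "2 * Cl A (A^2 - 4*B) (Suc n) = 2^(Suc n) * (2 * lucas_u A B (Suc (Suc n)) - A * lucas_u A B (Suc n))"
  proof -
    have "2 * Cl A (A^2 - 4*B) (Suc n) = A * (2 * Cl A (A^2 - 4*B) n) + (A^2 - 4*B) * (2 * Sl A (A^2 - 4*B) n)"
      unfolding Cl_Suc by (simp add: algebra_simps)
    also have "\<dots> = A * (2^n * (2 * lucas_u A B (Suc n) - A * lucas_u A B n)) + (A^2 - 4*B) * (2^n * lucas_u A B n)"
      using Suc.IH by simp
    also have "\<dots> = 2^(Suc n) * (2 * lucas_u A B (Suc (Suc n)) - A * lucas_u A B (Suc n))"
      by (simp add: algebra_simps power2_eq_square)
    finally show ?thesis .
  qed
  show ?case using e1 e2 by blast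
qed

lemma Gsum_prime:
  assumes "prime p"
  shows "[Gsum A p f = A^p * f 0 + f p] (mod int p)"
proof -
  have p0: "p > 0" using assms prime_gt_0_nat by blast
  have "Gsum A p f = (\<Sum>j\<in>{0} \<union> {1..<p} \<union> {p}. int (p choose j) * A^(p-j) * f j)"
    unfolding Gsum_def by (rule sum.cong) (use p0 in auto)
  also have "\<dots> = A^p * f 0 + (\<Sum>j\<in>{1..<p}. int (p choose j) * A^(p-j) * f j) + f p"
    using p0 by (subst sum.union_disjoint; auto)+
  also have "[\<dots> = A^p * f 0 + 0 + f p] (mod int p)"
  proof -
    have "[(\<Sum>j\<in>{1..<p}. int (p choose j) * A^(p-j) * f j) = (\<Sum>j\<in>{1..<p}. 0)] (mod int p)"
    proof (rule cong_sum)
      fix j assume j: "j \<in> {1..<p}"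
      have "p dvd (p choose j)" using j assms by (intro dvd_choose_prime) auto
      hence "int p dvd int (p choose j) * A^(p-j) * f j" by (metis dvd_mult2 int_dvd_int_iff)
      thus "[int (p choose j) * A^(p-j) * f j = 0] (mod int p)" by (simp add: cong_0_iff)
    qed
    thus ?thesis by (intro cong_add cong_refl) simp
  qed
  finally show ?thesis by simp
qed

lemma int_fermat1:
  assumes p: "prime p" and nd: "\<not> int p dvd a"
  shows "[a^(p-1) = 1] (mod int p)"
proof -
  have p0: "int p > 0" using p prime_gt_0_nat by simp
  let ?a = "nat (a mod int p)"
  have e: "int ?a = a mod int p" using p0 by simp
  have "\<not> p dvd ?a"
  proof
    assume "p dvd ?a"
    hence "int p dvd a mod int p" using e by (metis int_dvd_int_iff)
    hence "int p dvd a" by (simp add: dvd_mod_iff)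
    thus False using nd by simp
  qed
  hence "[?a^(p-1) = 1] (mod p)" using fermat_theorem p by blast
  hence "[int (?a^(p-1)) = int 1] (mod int p)" using cong_int_iff by blast
  hence "[(a mod int p)^(p-1) = 1] (mod int p)" using e by simp
  moreover have "[(a mod int p)^(p-1) = a^(p-1)] (mod int p)"
    by (intro cong_pow) (simp add: cong_def)
  ultimately show ?thesis by (meson cong_sym cong_trans)
qed

lemma int_fermat: "prime p \<Longrightarrow> [(a::int)^p = a] (mod int p)"
proof (cases "int p dvd a")
  case True
  assume p: "prime p"
  then have "p > 0" using prime_gt_0_nat by blast
  then have "int p dvd a^p" using True by (meson dvd_power dvd_trans)
  then show ?thesis using True by (meson cong_0_iff cong_sym cong_trans)
next
  case False
  assume p: "prime p"
  then have "prime (int p)" by simp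
  have "[a^(p-1) = 1] (mod int p)"
    using int_fermat1[OF p False] .
  hence "[a^(p-1) * a = 1 * a] (mod int p)" by (intro cong_mult cong_refl)
  moreover have "a^(p-1) * a = a^p" using p prime_gt_0_nat
    by (metis Suc_diff_1 power_Suc2)
  ultimately show ?thesis by simp
qed

lemma lucas_prime:
  assumes "prime p" "odd p"
  shows "[lucas_u A B p = (A^2 - 4*B)^((p-1) div 2)] (mod int p)"
    and "[2 * lucas_u A B (Suc p) - A * lucas_u A B p = A] (mod int p)"
proof -
  let ?D = "A^2 - 4*B"
  have p1: "p > 1" using assms prime_gt_1_nat by blast
  have wo0: "wo ?D 0 = 0" and wop: "wo ?D p = ?D^((p-1) div 2)"
    using assms(2) by (auto simp: wo_def elim!: oddE)
  have we0: "we ?D 0 = 1" and wep: "we ?D p = 0" using assms(2) by (auto simp: we_def)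
  have S: "[Sl A ?D p = ?D^((p-1) div 2)] (mod int p)"
    using Gsum_prime[OF assms(1), of A "wo ?D"] wo0 wop unfolding Sl_def by simp
  have C: "[Cl A ?D p = A] (mod int p)"
    using Gsum_prime[OF assms(1), of A "we ?D"] we0 wep int_fermat[OF assms(1), of A] unfolding Cl_def
    by (metis add.right_neutral cong_trans mult.right_neutral)
  have two: "[(2::int)^p = 2] (mod int p)" by (rule int_fermat[OF assms(1)])
  have "p \<noteq> 2" using assms(2) by auto
  hence p2: "p > 2" using p1 by simp
  have "\<not> int p dvd 2" using p2 by (auto dest!: zdvd_imp_le)
  moreover have "prime (int p)" using assms(1) by simp
  ultimately have cop: "coprime (2::int) (int p)"
    using prime_imp_coprime by (metis coprime_commute)
  have L: "2 * Sl A ?D p = 2^p * lucas_u A B p" and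
       L2: "2 * Cl A ?D p = 2^p * (2 * lucas_u A B (Suc p) - A * lucas_u A B p)"
    using lucas_binom[of A B p] by simp_all
  have "[2 * lucas_u A B p = 2^p * lucas_u A B p] (mod int p)"
    using two by (intro cong_mult cong_refl) (rule cong_sym)
  also have "2^p * lucas_u A B p = 2 * Sl A ?D p" using L by simp
  also have "[2 * Sl A ?D p = 2 * ?D^((p-1) div 2)] (mod int p)" using S by (intro cong_mult cong_refl)
  finally show "[lucas_u A B p = ?D^((p-1) div 2)] (mod int p)"
    by (rule iffD1[OF cong_mult_lcancel[OF cop]])
  have "[2 * (2 * lucas_u A B (Suc p) - A * lucas_u A B p) = 2^p * (2 * lucas_u A B (Suc p) - A * lucas_u A B p)] (mod int p)"
    using two by (intro cong_mult cong_refl) (rule cong_sym)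
  also have "2^p * (2 * lucas_u A B (Suc p) - A * lucas_u A B p) = 2 * Cl A ?D p" using L2 by simp
  also have "[2 * Cl A ?D p = 2 * A] (mod int p)" using C by (intro cong_mult cong_refl)
  finally show "[2 * lucas_u A B (Suc p) - A * lucas_u A B p = A] (mod int p)"
    by (rule iffD1[OF cong_mult_lcancel[OF cop]])
qed




lemma mult_P: "[:c, b, 1::int:] * R = smult c R + pCons 0 (smult b R + pCons 0 R)"
  by (simp add: mult_pCons_left smult_one)

lemma mult_L: "[:b, 2::int:] * R = smult b R + pCons 0 (smult 2 R)"
  by (simp add: mult_pCons_left smult_one)

lemma deriv_rel: "[:c, b, 1::int:] * pderiv ([:c, b, 1:] ^ N) = [:b, 2:] * smult (of_nat N) ([:c, b, 1:] ^ N)"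
proof (cases N)
  case 0 then show ?thesis by simp
next
  case (Suc m)
  have "pderiv [:c, b, 1::int:] = [:b, 2:]" by (simp add: pderiv_pCons)
  then show ?thesis unfolding Suc pderiv_power_Suc
    by (simp only: mult_smult_left mult_smult_right power_Suc mult_ac)
qed

lemma trin_rec0:
  fixes b c :: int and N :: nat
  defines "q \<equiv> \<lambda>n. Polynomial.coeff ([:c, b, 1:] ^ N) n"
  shows "c * q 1 = int N * b * q 0"
proof -
  have "Polynomial.coeff ([:c, b, 1:] * pderiv ([:c, b, 1:] ^ N)) 0 = Polynomial.coeff ([:b, 2:] * smult (of_nat N) ([:c, b, 1:] ^ N)) 0"
    by (simp only: deriv_rel)
  then show ?thesis unfolding q_def mult_P mult_L by (simp add: coeff_pderiv algebra_simps)
qed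

lemma trin_rec:
  fixes b c :: int and N :: nat
  defines "q \<equiv> \<lambda>n. Polynomial.coeff ([:c, b, 1:] ^ N) n"
  shows "c * int (n+2) * q (n+2) + b * int (n+1) * q (n+1) + int n * q n = int N * (b * q (n+1) + 2 * q n)"
proof -
  have "Polynomial.coeff ([:c, b, 1:] * pderiv ([:c, b, 1:] ^ N)) (Suc n) = Polynomial.coeff ([:b, 2:] * smult (of_nat N) ([:c, b, 1:] ^ N)) (Suc n)"
    by (simp only: deriv_rel)
  then show ?thesis unfolding q_def mult_P mult_L
    by (cases n) (simp_all add: coeff_pderiv algebra_simps)
qed

definition Fl :: "int \<Rightarrow> int \<Rightarrow> nat \<Rightarrow> int" where
  "Fl b c n = int (n+1) * (2 * lucas_u (-b) c (n+3) + b * lucas_u (-b) c (n+2)) - 2 * c * lucas_u (-b) c (n+1)"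

lemma lu_rec: "lucas_u A B (n+2) = A * lucas_u A B (n+1) - B * lucas_u A B n"
  by (simp add: numeral_2_eq_2)

lemma Fl_rec: "int (n+2) * Fl b c (n+2) + int (n+3) * b * Fl b c (n+1) + int (n+4) * c * Fl b c n = 0"
proof -
  define v where "v k = lucas_u (-b) c (n+k)" for k
  have rk: "v (k+2) = -b * v (k+1) - c * v k" for k
    unfolding v_def using lu_rec[of "-b" c "n+k"] by (simp only: add.assoc)
  have r5: "v 5 = -b * v 4 - c * v 3" using rk[of 3] by (simp add: eval_nat_numeral)
  have r4: "v 4 = -b * v 3 - c * v 2" using rk[of 2] by (simp add: eval_nat_numeral)
  have r3: "v 3 = -b * v 2 - c * v 1" using rk[of 1] by (simp add: eval_nat_numeral)
  have e: "lucas_u (-b) c (n + a + k) = v (a+k)" for a k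
    unfolding v_def by (simp only: add.assoc)
  have F2: "Fl b c (n+2) = (int n + 3) * (2 * v 5 + b * v 4) - 2 * c * v 3"
    unfolding Fl_def e by (simp del: lucas_u.simps add: eval_nat_numeral)
  have F1: "Fl b c (n+1) = (int n + 2) * (2 * v 4 + b * v 3) - 2 * c * v 2"
    unfolding Fl_def e by (simp del: lucas_u.simps add: eval_nat_numeral)
  have F0: "Fl b c n = (int n + 1) * (2 * v 3 + b * v 2) - 2 * c * v 1"
    unfolding Fl_def v_def by (simp del: lucas_u.simps)
  show ?thesis unfolding F2 F1 F0 r5 r4 r3 by (simp add: algebra_simps)
qed

lemma Fl_0: "Fl b c 0 = b^2 - 4*c"
  by (simp add: Fl_def numeral_3_eq_3 numeral_2_eq_2 power2_eq_square algebra_simps)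

lemma Fl_1: "Fl b c 1 = -2 * b * (b^2 - 4*c)"
  by (simp add: Fl_def numeral_3_eq_3 numeral_2_eq_2 eval_nat_numeral power2_eq_square algebra_simps)




lemma trin_closed:
  fixes p :: nat and b c :: int
  assumes p: "prime p" "odd p" and nc: "\<not> int p dvd c" and n: "n \<le> p - 1"
  shows "[(b^2 - 4*c) * c^(n+1) * Polynomial.coeff ([:c, b, 1:] ^ (p-2)) n = Fl b c n] (mod int p)"
proof -
  define q where "q n = Polynomial.coeff ([:c, b, 1:] ^ (p-2)) n" for n
  define D where "D = b^2 - 4*c"
  define E where "E n = D * c^(n+1) * q n - Fl b c n" for n
  define N where "N = int p - 2"
  have p1: "p > 1" using p prime_gt_1_nat by blast
  have p2: "p > 2" using p1 p(2) by (cases "p = 2") auto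
  have intN: "int (p - 2) = N" unfolding N_def using p2 by simp
  have pr: "prime (int p)" using p by simp
  have E0: "int p dvd E 0"
  proof -
    have q0: "q 0 = c^(p-2)" unfolding q_def by (simp add: coeff_0_power)
    have "p - 1 = Suc (p - 2)" using p2 by simp
    hence cc: "c * c^(p-2) = c^(p-1)" by simp
    have "E 0 = D * (c * c^(p-2)) - D" unfolding E_def q0 D_def by (simp add: Fl_0)
    hence "E 0 = D * (c^(p-1) - 1)" unfolding cc by (simp add: algebra_simps)
    moreover have "int p dvd c^(p-1) - 1" using int_fermat1[OF p(1) nc] by (simp add: cong_iff_dvd_diff)
    ultimately show ?thesis by simp
  qed
  have E1: "int p dvd E 1"
  proof -
    have r: "c * q 1 = N * b * q 0" using trin_rec0[where b=b and c=c and N="p-2"] unfolding q_def intN .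
    have e1: "E 1 = D * c * (c * q 1) + 2 * b * D" unfolding E_def D_def Fl_1
      by (simp add: power2_eq_square algebra_simps)
    have e0: "E 0 = D * c * q 0 - D" unfolding E_def D_def
      by (simp add: Fl_0 power2_eq_square algebra_simps)
    have "E 1 = N * b * E 0 + (N + 2) * b * D"
      unfolding e0 e1 r by (simp add: algebra_simps)
    moreover have "N + 2 = int p" unfolding N_def by simp
    ultimately show ?thesis using E0 by simp
  qed
  have step: "int p dvd E (n+2)" if "int p dvd E n" "int p dvd E (n+1)" "n + 2 < p" for n
  proof -
    have r: "c * int (n+2) * q (n+2) + b * int (n+1) * q (n+1) + int n * q n = N * (b * q (n+1) + 2 * q n)"
      using trin_rec[where b=b and c=c and N="p-2" and n=n] unfolding q_def intN .
    have f: "int (n+2) * Fl b c (n+2) + int (n+3) * b * Fl b c (n+1) + int (n+4) * c * Fl b c n = 0"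
      by (rule Fl_rec)
    have pw: "c^(n+2+1) = c^(n+1) * c * c" "c^(n+1+1) = c^(n+1) * c" by simp_all
    have r': "c * (int n + 2) * q (n+2) + b * (int n + 1) * q (n+1) + int n * q n = N * (b * q (n+1) + 2 * q n)"
      using r by (simp add: ac_simps)
    have f': "(int n + 2) * Fl b c (n+2) + (int n + 3) * b * Fl b c (n+1) + (int n + 4) * c * Fl b c n = 0"
      using f by (simp add: ac_simps)
    have key': "(int n + 2) * E (n+2) = (N - int n - 1) * b * E (n+1) + (2*N - int n) * c * E n
                 + (N + 2) * (b * Fl b c (n+1) + 2 * c * Fl b c n)"
    proof -
      have gen: "\<And>(X::int) (m::int) Q0 Q1 Q2 F0 F1 F2.
        c * (m + 2) * Q2 + b * (m + 1) * Q1 + m * Q0 = N * (b * Q1 + 2 * Q0) \<Longrightarrow>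
        (m + 2) * F2 + (m + 3) * b * F1 + (m + 4) * c * F0 = 0 \<Longrightarrow>
        (m + 2) * (D * (X * c * c) * Q2 - F2) = (N - m - 1) * b * (D * (X * c) * Q1 - F1)
          + (2*N - m) * c * (D * X * Q0 - F0) + (N + 2) * (b * F1 + 2 * c * F0)"
      proof -
        fix X m Q0 Q1 Q2 F0 F1 F2 :: int
        assume r: "c * (m + 2) * Q2 + b * (m + 1) * Q1 + m * Q0 = N * (b * Q1 + 2 * Q0)"
          and f: "(m + 2) * F2 + (m + 3) * b * F1 + (m + 4) * c * F0 = 0"
        have r2: "c * (m + 2) * Q2 = N * (b * Q1 + 2 * Q0) - b * (m + 1) * Q1 - m * Q0" using r by linarith
        have f2: "(m + 2) * F2 = - ((m + 3) * b * F1 + (m + 4) * c * F0)" using f by linarith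
        have "(m + 2) * (D * (X * c * c) * Q2 - F2) = D * X * c * (c * (m + 2) * Q2) - (m + 2) * F2"
          by (simp add: algebra_simps)
        also have "\<dots> = D * X * c * (N * (b * Q1 + 2 * Q0) - b * (m + 1) * Q1 - m * Q0)
                 + ((m + 3) * b * F1 + (m + 4) * c * F0)" unfolding r2 f2 by simp
        also have "\<dots> = (N - m - 1) * b * (D * (X * c) * Q1 - F1)
          + (2*N - m) * c * (D * X * Q0 - F0) + (N + 2) * (b * F1 + 2 * c * F0)"
          by (simp add: algebra_simps)
        finally show "(m + 2) * (D * (X * c * c) * Q2 - F2) = (N - m - 1) * b * (D * (X * c) * Q1 - F1)
          + (2*N - m) * c * (D * X * Q0 - F0) + (N + 2) * (b * F1 + 2 * c * F0)" .
      qed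
      show ?thesis unfolding E_def pw by (rule gen[OF r' f'])
    qed
    have key: "int (n+2) * E (n+2) = (N - int n - 1) * b * E (n+1) + (2*N - int n) * c * E n
                 + (N + 2) * (b * Fl b c (n+1) + 2 * c * Fl b c n)"
      using key' by (simp add: ac_simps)
    have "int p dvd int (n+2) * E (n+2)"
      unfolding key using that(1,2) N_def by simp
    moreover have "\<not> int p dvd int (n+2)" using that(3) by (auto dest!: zdvd_imp_le)
    ultimately show ?thesis using pr prime_dvd_mult_iff by blast
  qed
  have all: "int p dvd E m \<and> int p dvd E (m+1)" if "m + 1 \<le> p - 1" for m
    using that
  proof (induction m)
    case 0 then show ?case using E0 E1 by simp
  next
    case (Suc m)
    then have "int p dvd E m \<and> int p dvd E (m+1)" by simp
    moreover have "m + 2 < p" using Suc.prems by simp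
    ultimately show ?case using step[of m] by (simp add: add.assoc)
  qed
  have "int p dvd E n"
  proof (cases n)
    case 0 then show ?thesis using E0 by simp
  next
    case (Suc m) then show ?thesis using all[of m] n by simp
  qed
  then show ?thesis unfolding E_def q_def D_def by (simp add: cong_iff_dvd_diff)
qed




lemma P_ne0: "[:c, b, 1::int:] \<noteq> 0" by simp
lemma deg_P: "degree [:c, b, 1::int:] = 2" by simp

lemma deg_PN: "degree ([:c, b, 1::int:] ^ N) = 2 * N"
  using degree_power_eq[OF P_ne0, of c b N] deg_P by simp

lemma lead_PN: "Polynomial.coeff ([:c, b, 1::int:] ^ N) (2 * N) = 1"
proof -
  have "lead_coeff ([:c, b, 1::int:] ^ N) = lead_coeff [:c, b, 1::int:] ^ N" by (rule lead_coeff_power)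
  thus ?thesis using deg_PN[of c b N] by simp
qed

lemma high_PN: "m > 2 * N \<Longrightarrow> Polynomial.coeff ([:c, b, 1::int:] ^ N) m = 0"
  using deg_PN[of c b N] by (simp add: coeff_eq_0)

lemma trinom_nat: "trinom N (int k) b c = Polynomial.coeff ([:c, b, 1:] ^ N) (N + k)"
  unfolding trinom_def by (simp add: nat_add_distrib)

lemma U_last:
  assumes "p \<ge> 2"
  shows "U_fun p b c (p - 1) = Polynomial.coeff ([:c, b, 1:] ^ (p-2)) (p-2)"
proof -
  have "trinom (p-2) (int (p-1)) b c = 0"
    unfolding trinom_nat using assms by (intro high_PN) simp
  moreover have "trinom (p-2) (int (p - 1 - (p-1))) b c = Polynomial.coeff ([:c, b, 1:] ^ (p-2)) (p-2)"
    unfolding trinom_nat by simp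
  ultimately show ?thesis unfolding U_fun_def by simp
qed

lemma U_pm2:
  assumes "p \<ge> 3"
  shows "U_fun p b c (p - 2) = 1 + c * Polynomial.coeff ([:c, b, 1:] ^ (p-2)) (p-1)"
proof -
  have "trinom (p-2) (int (p-2)) b c = 1"
    unfolding trinom_nat using lead_PN[of c b "p-2"] by (simp add: mult_2)
  moreover have "p - 1 - (p - 2) = 1" using assms by simp
  moreover have "trinom (p-2) 1 b c = Polynomial.coeff ([:c, b, 1:] ^ (p-2)) (p-1)"
  proof -
    have "p - 2 + 1 = p - 1" using assms by simp
    thus ?thesis using trinom_nat[of "p-2" 1 b c] by simp
  qed
  ultimately show ?thesis unfolding U_fun_def by simp
qed

lemma U_sym:
  assumes p: "prime p" and nc: "\<not> int p dvd c" and k: "k \<le> p - 1"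
  shows "[U_fun p b c k = c^(p-1-k) * U_fun p b c (p-1-k)] (mod int p)"
proof -
  define t where "t j = trinom (p-2) (int j) b c" for j
  have e: "p - 1 - (p - 1 - k) = k" using k by simp
  have "c^(p-1-k) * U_fun p b c (p-1-k) = c^(p-1-k) * t (p-1-k) + c^(p-1-k) * c^k * t k"
    unfolding U_fun_def t_def e by (simp add: algebra_simps)
  also have "c^(p-1-k) * c^k = c^(p-1)"
  proof -
    have "p - 1 - k + k = p - 1" using k by simp
    thus ?thesis by (metis power_add)
  qed
  finally have eq1: "c^(p-1-k) * U_fun p b c (p-1-k) = c^(p-1-k) * t (p-1-k) + c^(p-1) * t k" .
  have G: "[c^(p-1-k) * t (p-1-k) + c^(p-1) * t k = c^(p-1-k) * t (p-1-k) + 1 * t k] (mod int p)"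
    using int_fermat1[OF p nc] by (intro cong_add cong_mult cong_refl)
  have eq2: "c^(p-1-k) * t (p-1-k) + 1 * t k = U_fun p b c k"
    unfolding U_fun_def t_def by simp
  have "[c^(p-1-k) * U_fun p b c (p-1-k) = U_fun p b c k] (mod int p)"
    using G unfolding eq1[symmetric] eq2 .
  then show ?thesis by (rule cong_sym)
qed

lemma T_cong:
  fixes p :: nat and b c :: int
  assumes p: "prime p" "odd p" and nc: "\<not> int p dvd c"
  shows "[2 * c * lucas_u (-b) c (p-1) - b = - (b^2 - 4*c) * Polynomial.coeff ([:c, b, 1:] ^ (p-2)) (p-2)] (mod int p)"
proof -
  let ?q = "Polynomial.coeff ([:c, b, 1:] ^ (p-2)) (p-2)"
  let ?u = "lucas_u (-b) c"
  have p1: "p > 1" using p prime_gt_1_nat by blast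
  have p2: "p > 2" using p1 p(2) by (cases "p = 2") auto
  have A: "[(b^2 - 4*c) * c^(p-2+1) * ?q = Fl b c (p-2)] (mod int p)"
    using trin_closed[OF p nc, of "p-2" b] by simp
  have "p - 2 + 1 = p - 1" using p2 by simp
  hence c1: "[c^(p-2+1) = 1] (mod int p)" using int_fermat1[OF p(1) nc] by (simp only:)
  have B: "[(b^2 - 4*c) * c^(p-2+1) * ?q = (b^2 - 4*c) * 1 * ?q] (mod int p)"
    using c1 by (intro cong_mult cong_refl)
  have Fe: "Fl b c (p-2) = (int p - 1) * (2 * ?u (Suc p) - (-b) * ?u p) - 2 * c * ?u (p-1)"
    unfolding Fl_def using p2 by (simp add: numeral_3_eq_3 numeral_2_eq_2 Suc_diff_Suc algebra_simps of_nat_diff)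
  have L: "[2 * ?u (Suc p) - (-b) * ?u p = -b] (mod int p)" using lucas_prime(2)[OF p, of "-b" c] .
  have "[(int p - 1) * (2 * ?u (Suc p) - (-b) * ?u p) - 2 * c * ?u (p-1) = (0 - 1) * (-b) - 2 * c * ?u (p-1)] (mod int p)"
    using L by (intro cong_diff cong_mult cong_refl) (simp add: cong_def)
  hence "[Fl b c (p-2) = b - 2 * c * ?u (p-1)] (mod int p)" unfolding Fe by simp
  hence "[(b^2 - 4*c) * c^(p-2+1) * ?q = b - 2 * c * ?u (p-1)] (mod int p)"
    using A by (rule cong_trans[rotated])
  hence "[(b^2 - 4*c) * 1 * ?q = b - 2 * c * ?u (p-1)] (mod int p)"
    using B by (meson cong_sym cong_trans)
  hence "[(b^2 - 4*c) * ?q = b - 2 * c * ?u (p-1)] (mod int p)" by simp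
  hence "[- ((b^2 - 4*c) * ?q) = - (b - 2 * c * ?u (p-1))] (mod int p)" by (rule cong_minus_minus_iff[THEN iffD2])
  hence X: "[- (b - 2 * c * ?u (p-1)) = - ((b^2 - 4*c) * ?q)] (mod int p)" by (rule cong_sym)
  have e1: "- (b - 2 * c * ?u (p-1)) = 2 * c * ?u (p-1) - b" by simp
  have e2: "- ((b^2 - 4*c) * ?q) = - (b^2 - 4*c) * ?q" by (simp only: minus_mult_left)
  show ?thesis using X unfolding e1 e2 .
qed

lemma Upm2_cong:
  fixes p :: nat and b c :: int
  assumes p: "prime p" "odd p" and nc: "\<not> int p dvd c"
  shows "[4*c - b^2 + 2*c * Legendre (b^2 - 4*c) (int p) = - (b^2 - 4*c) * U_fun p b c (p - 2)] (mod int p)"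
proof -
  let ?t = "Polynomial.coeff ([:c, b, 1:] ^ (p-2)) (p-1)"
  let ?u = "lucas_u (-b) c"
  let ?D = "b^2 - 4*c"
  have p1: "p > 1" using p prime_gt_1_nat by blast
  have p2: "p > 2" using p1 p(2) by (cases "p = 2") auto
  have A: "[?D * c^(p-1+1) * ?t = Fl b c (p-1)] (mod int p)"
    using trin_closed[OF p nc, of "p-1" b] by simp
  have c1: "[c^(p-1+1) = c] (mod int p)" using int_fermat[OF p(1), of c] p1 by simp
  have B: "[?D * c^(p-1+1) * ?t = ?D * c * ?t] (mod int p)"
    using c1 by (intro cong_mult cong_refl)
  have Fe: "Fl b c (p-1) = int p * (2 * ?u (p+2) + b * ?u (p+1)) - 2 * c * ?u p"
    unfolding Fl_def using p1 by (simp add: numeral_3_eq_3 numeral_2_eq_2 Suc_diff_Suc of_nat_diff)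
  have "[Fl b c (p-1) = 0 * (2 * ?u (p+2) + b * ?u (p+1)) - 2 * c * ?u p] (mod int p)"
    unfolding Fe by (intro cong_diff cong_mult cong_refl) (simp add: cong_def)
  moreover have "[2 * c * ?u p = 2 * c * ?D^((p-1) div 2)] (mod int p)"
    using lucas_prime(1)[OF p, of "-b" c] by (intro cong_mult cong_refl) simp
  moreover have "[?D^((p-1) div 2) = Legendre ?D (int p)] (mod int p)"
    using euler_criterion[OF p(1) p2, of ?D] by (simp add: cong_sym_eq)
  ultimately have X1: "[Fl b c (p-1) = - (2 * c * ?u p)] (mod int p)"
    and X2: "[2 * c * ?u p = 2 * c * Legendre ?D (int p)] (mod int p)"
    by (auto intro: cong_trans cong_mult cong_refl)
  have X3: "[- (2 * c * ?u p) = - (2 * c * Legendre ?D (int p))] (mod int p)"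
    using X2 by (simp add: cong_minus_minus_iff)
  have F: "[Fl b c (p-1) = - (2 * c * Legendre ?D (int p))] (mod int p)"
    using cong_trans[OF X1 X3] .
  have G: "[?D * c * ?t = - (2 * c * Legendre ?D (int p))] (mod int p)"
    using cong_trans[OF cong_sym[OF B] cong_trans[OF A F]] .
  have H: "[?D + ?D * c * ?t = ?D + - (2 * c * Legendre ?D (int p))] (mod int p)"
    using G by (intro cong_add cong_refl)
  have H2: "[- (?D + ?D * c * ?t) = - (?D + - (2 * c * Legendre ?D (int p)))] (mod int p)"
    using H by (simp only: cong_minus_minus_iff)
  have eq1: "- (b^2 - 4*c) * U_fun p b c (p - 2) = - (?D + ?D * c * ?t)"
    using U_pm2[of p b c] p2 by (simp add: algebra_simps)
  have eq2: "- (?D + - (2 * c * Legendre ?D (int p))) = 4*c - b^2 + 2*c * Legendre ?D (int p)"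
    by simp
  have "[- (b^2 - 4*c) * U_fun p b c (p - 2) = 4*c - b^2 + 2*c * Legendre ?D (int p)] (mod int p)"
    using H2 unfolding eq1[symmetric] eq2 .
  thus ?thesis by (rule cong_sym)
qed




lemma fermat_exp:
  assumes p: "prime p" and nd: "\<not> int p dvd t"
  shows "[t^e = t^(e mod (p-1))] (mod int p)"
proof -
  have "t^e = (t^(p-1))^(e div (p-1)) * t^(e mod (p-1))"
    by (metis div_mult_mod_eq power_add power_mult mult.commute)
  also have "[\<dots> = 1^(e div (p-1)) * t^(e mod (p-1))] (mod int p)"
    using int_fermat1[OF p nd] by (intro cong_mult cong_pow cong_refl)
  finally show ?thesis by simp
qed

lemma power_sum_prime:
  assumes p: "prime p"
  shows "[(\<Sum>j<p-1. (int j + 1)^e) = (if (p-1) dvd e then -1 else 0)] (mod int p)"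
proof (cases "(p-1) dvd e")
  case True
  then obtain k where k: "e = (p-1) * k" by blast
  have "[(\<Sum>j<p-1. (int j + 1)^e) = (\<Sum>j<p-1. 1)] (mod int p)"
  proof (rule cong_sum)
    fix j assume j: "j \<in> {..<p-1}"
    have "\<not> int p dvd int j + 1"
    proof
      assume "int p dvd int j + 1"
      hence "int p \<le> int j + 1" by (auto dest!: zdvd_imp_le)
      thus False using j by auto
    qed
    hence "[(int j + 1)^(p-1) = 1] (mod int p)" using int_fermat1[OF p] by blast
    hence "[((int j + 1)^(p-1))^k = 1^k] (mod int p)" by (rule cong_pow)
    thus "[(int j + 1)^e = 1] (mod int p)" by (simp add: k power_mult)
  qed
  moreover have "(\<Sum>j<p-1. (1::int)) = int p - 1"
  proof -
    have "p \<ge> 1" using prime_gt_0_nat[OF p] by simp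
    thus ?thesis by (simp add: of_nat_diff)
  qed
  moreover have "[int p - 1 = -1] (mod int p)" by (simp add: cong_iff_dvd_diff)
  ultimately have "[(\<Sum>j<p-1. (int j + 1)^e) = -1] (mod int p)"
    by (simp add: cong_trans)
  thus ?thesis using True by simp
next
  case False
  have p1: "p > 1" using p prime_gt_1_nat by blast
  obtain g where g: "residue_primroot p g" using prime_primitive_root_exists[OF p1 p] by blast
  have tot: "totient p = p - 1" using p by (simp add: totient_prime)
  have bij: "bij_betw (\<lambda>i. g ^ i mod p) {..<p-1} {0<..<p}"
    using residue_primroot_is_generator[OF p1 g] tot totatives_prime[OF p] by simp
  have "(\<Sum>j<p-1. (int j + 1)^e) = (\<Sum>t\<in>{0<..<p}. (int t)^e)"
  proof -
    have "bij_betw Suc {..<p-1} {0<..<p}"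
      by (rule bij_betwI[where g="\<lambda>t. t - 1"]) auto
    from sum.reindex_bij_betw[OF this, of "\<lambda>t. (int t)^e"] show ?thesis by (simp add: add.commute)
  qed
  also have "\<dots> = (\<Sum>i<p-1. (int (g ^ i mod p))^e)"
    using sum.reindex_bij_betw[OF bij, of "\<lambda>t. (int t)^e"] by simp
  also have "[\<dots> = (\<Sum>i<p-1. (int g ^ e)^i)] (mod int p)"
  proof (rule cong_sum)
    fix i
    have "[int (g ^ i mod p) = int g ^ i] (mod int p)"
      by (simp add: cong_def of_nat_mod zmod_int)
    hence "[(int (g ^ i mod p))^e = (int g ^ i)^e] (mod int p)" by (rule cong_pow)
    thus "[(int (g ^ i mod p))^e = (int g ^ e)^i] (mod int p)" by (simp add: power_mult[symmetric] mult.commute)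
  qed
  finally have S: "[(\<Sum>j<p-1. (int j + 1)^e) = (\<Sum>i<p-1. (int g ^ e)^i)] (mod int p)" .
  let ?G = "int g ^ e"
  have cop: "coprime p g" using g by (simp add: residue_primroot_def)
  have ng: "\<not> int p dvd int g"
  proof
    assume "int p dvd int g"
    hence "p dvd g" by simp
    hence "p dvd gcd p g" by simp
    thus False using cop p1 by simp
  qed
  have pr: "prime (int p)" using p by simp
  have nG: "\<not> int p dvd ?G"
  proof
    assume "int p dvd ?G"
    hence "int p dvd int g" by (rule prime_dvd_power[OF pr])
    with ng show False ..
  qed
  have "[?G^(p-1) = 1] (mod int p)" using int_fermat1[OF p nG] .
  hence d1: "int p dvd (?G - 1) * (\<Sum>i<p-1. ?G^i)"
    by (simp add: power_diff_1_eq[symmetric] cong_iff_dvd_diff)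
  have "\<not> [g ^ e = 1] (mod p)"
    using False g by (simp add: ord_divides' residue_primroot_def tot)
  hence "\<not> [int (g ^ e) = int 1] (mod int p)" using cong_int_iff by blast
  hence "\<not> int p dvd ?G - 1" by (simp add: cong_iff_dvd_diff)
  hence "int p dvd (\<Sum>i<p-1. ?G^i)"
    using d1 prime_dvd_mult_iff[OF pr] by blast
  hence Z: "[(\<Sum>i<p-1. ?G^i) = 0] (mod int p)" by (simp add: cong_0_iff)
  show ?thesis using cong_trans[OF S Z] False by simp
qed




lemma det_cong:
  assumes A: "A \<in> carrier_mat n n" and B: "B \<in> carrier_mat n n"
    and e: "\<And>i j. i < n \<Longrightarrow> j < n \<Longrightarrow> [A $$ (i,j) = B $$ (i,j)] (mod m)"
  shows "[det A = det (B :: int mat)] (mod m)"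
  unfolding det_def'[OF A] det_def'[OF B]
proof (rule cong_sum)
  fix \<pi> assume "\<pi> \<in> {\<pi>. \<pi> permutes {0..<n}}"
  hence pi: "\<pi> permutes {0..<n}" by simp
  show "[signof \<pi> * (\<Prod>i = 0..<n. A $$ (i, \<pi> i)) = signof \<pi> * (\<Prod>i = 0..<n. B $$ (i, \<pi> i))] (mod m)"
  proof (intro cong_mult cong_refl cong_prod)
    fix i assume i: "i \<in> {0..<n}"
    hence "\<pi> i \<in> {0..<n}" using permutes_in_image[OF pi] by simp
    thus "[A $$ (i, \<pi> i) = B $$ (i, \<pi> i)] (mod m)" using i e by simp
  qed
qed

lemma pcompose_power': "(p ^ n) \<circ>\<^sub>p q = (p \<circ>\<^sub>p q) ^ n"
  by (induction n) (simp_all add: pcompose_mult one_pCons pcompose_pCons)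

lemma P_comp: "[:c, b, 1::int:] \<circ>\<^sub>p [:0, x:] = [:c, b * x, x^2:]"
  by (simp add: pcompose_pCons power2_eq_square algebra_simps)

lemma reflect_P: "reflect_poly [:c, b, 1::int:] = [:1, b, c:]"
  by (simp add: reflect_poly_def)

lemma trin_sym:
  fixes b c :: int
  assumes m: "m \<le> 2 * N"
  shows "c^m * Polynomial.coeff ([:c, b, 1:] ^ N) m = c^N * Polynomial.coeff ([:c, b, 1:] ^ N) (2 * N - m)"
proof -
  have 1: "Polynomial.coeff (([:c, b, 1:] ^ N) \<circ>\<^sub>p [:0, c:]) m = c^m * Polynomial.coeff ([:c, b, 1:] ^ N) m"
    by (rule coeff_pcompose_linear)
  have "[:c, b, 1::int:] \<circ>\<^sub>p [:0, c:] = smult c (reflect_poly [:c, b, 1:])"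
    unfolding P_comp reflect_P by (simp add: power2_eq_square)
  hence "([:c, b, 1::int:] ^ N) \<circ>\<^sub>p [:0, c:] = smult (c^N) (reflect_poly ([:c, b, 1:] ^ N))"
    unfolding pcompose_power' reflect_poly_power by (simp add: smult_power)
  hence "Polynomial.coeff (([:c, b, 1:] ^ N) \<circ>\<^sub>p [:0, c:]) m = c^N * Polynomial.coeff (reflect_poly ([:c, b, 1:] ^ N)) m"
    by simp
  also have "\<dots> = c^N * Polynomial.coeff ([:c, b, 1:] ^ N) (2 * N - m)"
    using m by (simp add: coeff_reflect_poly deg_PN)
  finally show ?thesis using 1 by simp
qed

lemma hom_eq:
  fixes x y b c :: int
  assumes x: "x \<noteq> 0" and c: "c \<noteq> 0"
  shows "(x^2 + b*x*y + c*y^2)^N = (\<Sum>m\<le>2*N. Polynomial.coeff ([:c, b, 1:] ^ N) m * x^m * y^(2*N-m))"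
proof -
  define S where "S = ([:c, b, 1:] ^ N) \<circ>\<^sub>p [:0, x:]"
  have cS: "Polynomial.coeff S m = x^m * Polynomial.coeff ([:c, b, 1:] ^ N) m" for m
    unfolding S_def by (rule coeff_pcompose_linear)
  have S2: "S = [:c, b * x, x^2:] ^ N" unfolding S_def pcompose_power' P_comp ..
  have Q0: "[:c, b * x, x^2:] \<noteq> 0" using c by simp
  have dQ: "degree [:c, b * x, x^2:] = 2" using x by simp
  have dS: "degree S = 2 * N" unfolding S2 degree_power_eq[OF Q0] dQ by simp
  have c0: "Polynomial.coeff S 0 \<noteq> 0" unfolding S2 using c by (simp add: coeff_0_power)
  have rQ: "reflect_poly [:c, b * x, x^2:] = [:x^2, b * x, c:]"
    using x by (simp add: reflect_poly_def)
  have "poly (reflect_poly S) y = (x^2 + b*x*y + c*y^2)^N"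
    unfolding S2 reflect_poly_power rQ poly_power by (simp add: power2_eq_square algebra_simps)
  moreover have "poly (reflect_poly S) y = (\<Sum>n\<le>2*N. Polynomial.coeff (reflect_poly S) n * y^n)"
    unfolding poly_altdef degree_reflect_poly_eq[OF c0] dS ..
  moreover have "\<dots> = (\<Sum>n\<le>2*N. x^(2*N-n) * Polynomial.coeff ([:c, b, 1:] ^ N) (2*N-n) * y^n)"
    by (rule sum.cong) (auto simp: coeff_reflect_poly dS cS)
  moreover have "\<dots> = (\<Sum>m\<le>2*N. Polynomial.coeff ([:c, b, 1:] ^ N) m * x^m * y^(2*N-m))"
    by (rule sum.reindex_bij_witness[of _ "\<lambda>n. 2*N - n" "\<lambda>n. 2*N - n"]) auto
  ultimately show ?thesis by simp
qed




definition rho :: "nat \<Rightarrow> nat \<Rightarrow> nat" where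
  "rho n r = (if r < n then (r + 1) mod n else r)"

lemma rho_permutes:
  assumes n: "n > 0"
  shows "rho n permutes {0..<n}"
proof (rule bij_imp_permutes)
  show "bij_betw (rho n) {0..<n} {0..<n}"
  proof (rule bij_betwI[where g="\<lambda>r. (r + (n - 1)) mod n"])
    show "rho n \<in> {0..<n} \<rightarrow> {0..<n}" using n by (auto simp: rho_def)
    show "(\<lambda>r. (r + (n - 1)) mod n) \<in> {0..<n} \<rightarrow> {0..<n}" using n by auto
    fix x assume x: "x \<in> {0..<n}"
    have "((x + 1) mod n + (n - 1)) mod n = (x + 1 + (n - 1)) mod n" by (simp add: mod_add_left_eq)
    also have "x + 1 + (n - 1) = x + n" using n by simp
    also have "(x + n) mod n = x" using x by simp
    finally show "((rho n x) + (n - 1)) mod n = x" using x by (simp add: rho_def)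
    have "(x + (n - 1)) mod n < n" using n by simp
    moreover have "((x + (n - 1)) mod n + 1) mod n = (x + (n - 1) + 1) mod n" by (simp add: mod_Suc_eq)
    moreover have "x + (n - 1) + 1 = x + n" using n by simp
    ultimately show "rho n ((x + (n - 1)) mod n) = x" using x by (simp add: rho_def)
  qed
  show "\<And>x. x \<notin> {0..<n} \<Longrightarrow> rho n x = x" by (simp add: rho_def)
qed

definition pi2 :: "nat \<Rightarrow> nat \<Rightarrow> nat" where
  "pi2 n r = (if r < n then (r + 2) mod n else r)"

lemma pi2_comp: "n > 0 \<Longrightarrow> pi2 n = rho n \<circ> rho n"
proof
  fix r assume n: "n > 0"
  show "pi2 n r = (rho n \<circ> rho n) r"
  proof (cases "r < n")
    case True
    have "((r + 1) mod n + 1) mod n = (r + 1 + 1) mod n" by (simp add: mod_Suc_eq)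
    thus ?thesis using True n by (simp add: pi2_def rho_def)
  qed (simp add: pi2_def rho_def)
qed

lemma pi2_permutes: "n > 0 \<Longrightarrow> pi2 n permutes {0..<n}"
  using pi2_comp rho_permutes permutes_compose by metis

lemma signof_pi2: "n > 0 \<Longrightarrow> (signof (pi2 n) :: int) = 1"
proof -
  assume n: "n > 0"
  have a: "sign (rho n \<circ> rho n) = sign (rho n) * sign (rho n)"
    using signof_compose[OF rho_permutes[OF n] rho_permutes[OF n], where 'a=int] by simp
  have b: "sign (rho n) * sign (rho n) = 1" by (simp add: sign_def)
  show ?thesis using pi2_comp[OF n] a b by simp
qed

lemma dvd_window:
  fixes n k :: nat
  assumes "n dvd k" "n - 1 \<le> k" "k \<le> 3 * n - 3" "n \<ge> 2"
  shows "k = n \<or> k = 2 * n"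
proof -
  obtain t where t: "k = n * t" using assms(1) by blast
  have "t \<noteq> 0" using t assms(2,4) by (cases "t = 0") auto
  moreover have "t < 3"
  proof (rule ccontr)
    assume "\<not> t < 3"
    hence "n * 3 \<le> n * t" by (intro mult_le_mono2) simp
    thus False using t assms(3,4) by linarith
  qed
  ultimately have "t = 1 \<or> t = 2" by auto
  thus ?thesis using t by auto
qed

lemma tau_dvd:
  fixes n r s :: nat
  assumes n: "n \<ge> 2" and r: "r < n" and s: "s < n"
  shows "n dvd ((2 * n - 2 - r) mod n + s) \<longleftrightarrow> s = pi2 n r"
proof -
  have "n dvd ((2 * n - 2 - r) mod n + s) \<longleftrightarrow> n dvd (2 * n - 2 - r + s)"
    by (simp add: dvd_eq_mod_eq_0 mod_add_left_eq)
  also have "\<dots> \<longleftrightarrow> s = pi2 n r"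
  proof
    assume d: "n dvd (2 * n - 2 - r + s)"
    have "2 * n - 2 - r + s = n \<or> 2 * n - 2 - r + s = 2 * n"
      by (rule dvd_window[OF d]) (use n r s in auto)
    thus "s = pi2 n r"
    proof
      assume e: "2 * n - 2 - r + s = n"
      hence "r + 2 \<ge> n" "s = r + 2 - n" using n r s by auto
      moreover have "(r + 2) mod n = r + 2 - n" using calculation(1) r n
        by (simp add: le_mod_geq)
      ultimately show ?thesis using r by (simp add: pi2_def)
    next
      assume e: "2 * n - 2 - r + s = 2 * n"
      hence "s = r + 2" using n r s by auto
      thus ?thesis using r s by (simp add: pi2_def)
    qed
  next
    assume e: "s = pi2 n r"
    show "n dvd (2 * n - 2 - r + s)"
    proof (cases "r + 2 < n")
      case True
      hence "s = r + 2" using e r by (simp add: pi2_def)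
      hence "2 * n - 2 - r + s = n * 2" using True by simp
      thus ?thesis by (metis dvd_triv_left)
    next
      case False
      have "r + 2 - n < n" using r n by simp
      hence "(r + 2) mod n = r + 2 - n" using r False by (simp add: le_mod_geq)
      hence "s = r + 2 - n" using e r by (simp add: pi2_def)
      hence "2 * n - 2 - r + s = n" using False r by simp
      thus ?thesis by simp
    qed
  qed
  finally show ?thesis .
qed




lemma sum_split2:
  fixes n :: nat and f :: "nat \<Rightarrow> int"
  shows "(\<Sum>m<n+n. f m) = (\<Sum>r<n. f r + f (r + n) :: int)"
proof -
  have "(\<Sum>m<n+n. f m) = (\<Sum>m\<in>{0..<n}. f m) + (\<Sum>m\<in>{n..<n+n}. f m)"
    by (simp add: atLeast0LessThan[symmetric] sum.atLeastLessThan_concat)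
  also have "(\<Sum>m\<in>{n..<n+n}. f m) = (\<Sum>r\<in>{0..<n}. f (r + n))"
    using sum.shift_bounds_nat_ivl[of f 0 n n] by simp
  finally show ?thesis by (simp add: atLeast0LessThan sum.distrib)
qed

lemma A_eq:
  fixes b c :: int
  assumes c: "c \<noteq> 0" and r: "r < p - 1" and p: "p \<ge> 3"
  shows "U_fun p b c (r+1) = Polynomial.coeff ([:c, b, 1:] ^ (p-2)) r + Polynomial.coeff ([:c, b, 1:] ^ (p-2)) (r + (p-1))"
proof -
  define q where "q m = Polynomial.coeff ([:c, b, 1:] ^ (p-2)) m" for m
  define N where "N = p - 2"
  have rN: "r \<le> N" using r p unfolding N_def by simp
  have e1: "p - 1 - (r + 1) = N - r" unfolding N_def by simp
  have e0: "p - 2 + (r + 1) = r + (p - 1)" using p by simp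
  have t1: "trinom (p-2) (int (r+1)) b c = q (r + (p-1))"
    unfolding trinom_nat q_def e0 ..
  have e2: "p - 2 + (N - r) = 2 * N - r" using rN unfolding N_def by simp
  have t2: "trinom (p-2) (int (p - 1 - (r+1))) b c = q (2 * N - r)"
    unfolding trinom_nat q_def e1 e2 ..
  have s: "c^r * q r = c^N * q (2 * N - r)"
    unfolding q_def N_def by (rule trin_sym) (use rN N_def in simp)
  have "c^N = c^r * c^(N - r)" using rN by (simp add: power_add[symmetric])
  hence "c^r * q r = c^r * (c^(N - r) * q (2 * N - r))" using s by (simp add: algebra_simps)
  hence "q r = c^(N - r) * q (2 * N - r)" using c by simp
  thus ?thesis unfolding U_fun_def t1 t2 unfolding e1 by (simp add: q_def N_def)
qed

lemma entry_cong:
  fixes b c :: int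
  assumes p: "prime p" "odd p" and nc: "\<not> int p dvd c" and i: "i < p - 1" and j: "j < p - 1"
  shows "[(int (i+1)^2 + b * int (i+1) * int (j+1) + c * int (j+1)^2)^(p-2) =
          (\<Sum>r<p-1. int (i+1)^r * (U_fun p b c (r+1) * int (j+1)^((2*(p-2) - r) mod (p-1))))] (mod int p)"
proof -
  define q where "q m = Polynomial.coeff ([:c, b, 1:] ^ (p-2)) m" for m
  define N where "N = p - 2"
  define n where "n = p - 1"
  define x where "x = int (i+1)"
  define y where "y = int (j+1)"
  define f where "f m = q m * x^m * y^(2*N-m)" for m
  have p1: "p > 1" using p prime_gt_1_nat by blast
  have p3: "p \<ge> 3" using p1 p(2) by (cases "p = 2") auto
  have c0: "c \<noteq> 0" using nc by auto
  have nN: "n = N + 1" unfolding n_def N_def using p3 by simp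
  have nx: "\<not> int p dvd x" unfolding x_def using i by (auto dest!: zdvd_imp_le)
  have ny: "\<not> int p dvd y" unfolding y_def using j by (auto dest!: zdvd_imp_le)
  have "(x^2 + b*x*y + c*y^2)^N = (\<Sum>m\<le>2*N. f m)"
    unfolding f_def q_def N_def by (rule hom_eq) (use c0 x_def in simp_all)
  also have "\<dots> = (\<Sum>m<n+n. f m)"
  proof -
    have "n + n = Suc (Suc (2*N))" using nN by simp
    moreover have "f (Suc (2*N)) = 0" unfolding f_def q_def N_def by (simp add: high_PN)
    ultimately show ?thesis by (simp add: lessThan_Suc_atMost[symmetric])
  qed
  also have "\<dots> = (\<Sum>r<n. f r + f (r + n))" by (rule sum_split2)
  also have "[\<dots> = (\<Sum>r<n. x^r * (U_fun p b c (r+1) * y^((2*N - r) mod n)))] (mod int p)"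
  proof (rule cong_sum)
    fix r assume r: "r \<in> {..<n}"
    hence rn: "r < n" by simp
    let ?Y = "y^((2*N - r) mod n)"
    have A: "U_fun p b c (r+1) = q r + q (r + n)"
      unfolding q_def n_def by (rule A_eq[OF c0]) (use rn n_def p3 in simp_all)
    have F1: "[f r = q r * x^r * ?Y] (mod int p)"
      unfolding f_def using fermat_exp[OF p(1) ny, of "2*N - r"] unfolding n_def
      by (intro cong_mult cong_refl)
    have F2: "[f (r + n) = q (r + n) * x^r * ?Y] (mod int p)"
    proof (cases "r + n \<le> 2 * N")
      case True
      have "[x^(r+n) = x^((r+n) mod (p-1))] (mod int p)" by (rule fermat_exp[OF p(1) nx])
      moreover have "(r + n) mod (p-1) = r" using rn by (metis mod_add_self2 mod_less n_def)
      ultimately have X: "[x^(r+n) = x^r] (mod int p)" by simp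
      have "[y^(2*N - (r+n)) = y^((2*N - (r+n)) mod (p-1))] (mod int p)" by (rule fermat_exp[OF p(1) ny])
      moreover have "(2*N - (r+n)) mod (p-1) = (2*N - r) mod n"
      proof -
        have "2*N - r = (2*N - (r+n)) + n" using True by simp
        hence "(2*N - r) mod n = (2*N - (r+n)) mod n" by simp
        thus ?thesis unfolding n_def by simp
      qed
      ultimately have Y: "[y^(2*N - (r+n)) = ?Y] (mod int p)" by simp
      show ?thesis unfolding f_def using X Y by (intro cong_mult cong_refl)
    next
      case False
      hence "q (r + n) = 0" unfolding q_def N_def by (intro high_PN) (simp add: N_def)
      thus ?thesis unfolding f_def by simp
    qed
    have "[f r + f (r + n) = q r * x^r * ?Y + q (r + n) * x^r * ?Y] (mod int p)"
      using F1 F2 by (rule cong_add)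
    thus "[f r + f (r + n) = x^r * (U_fun p b c (r+1) * ?Y)] (mod int p)"
      unfolding A by (simp add: algebra_simps)
  qed
  finally show ?thesis unfolding x_def y_def N_def n_def .
qed




lemma D_cong:
  fixes b c :: int
  assumes p: "prime p" "odd p" and nc: "\<not> int p dvd c"
  shows "[D_det p b c = (\<Prod>r<p-1. U_fun p b c (r+1))] (mod int p)"
proof -
  define n where "n = p - 1"
  define X where "X k = int (k+1)" for k
  define tau where "tau r = (2*(p-2) - r) mod (p-1)" for r
  define A where "A r = U_fun p b c (r+1)" for r
  have p1: "p > 1" using p prime_gt_1_nat by blast
  have p3: "p \<ge> 3" using p1 p(2) by (cases "p = 2") auto
  have n2: "n \<ge> 2" using p3 unfolding n_def by simp
  have evn: "even n" using p(2) p1 unfolding n_def by simp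
  define M where "M = mat n n (\<lambda>(i, j). (int (i+1)^2 + b * int (i+1) * int (j+1) + c * int (j+1)^2) ^ (p - 2))"
  define V where "V = mat n n (\<lambda>(i, r). X i ^ r)"
  define W where "W = mat n n (\<lambda>(r, j). X j ^ tau r)"
  define W' where "W' = mat n n (\<lambda>(r, j). A r * X j ^ tau r)"
  define Dg where "Dg = mat n n (\<lambda>(r, s). if r = s then A r else 0)"
  have cM: "M \<in> carrier_mat n n" and cV: "V \<in> carrier_mat n n" and cW: "W \<in> carrier_mat n n"
    and cW': "W' \<in> carrier_mat n n" and cD: "Dg \<in> carrier_mat n n"
    unfolding M_def V_def W_def W'_def Dg_def by auto
  have DM: "D_det p b c = det M" unfolding D_det_def M_def n_def ..
  have s1: "[det M = det (V * W')] (mod int p)"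
  proof (rule det_cong[OF cM])
    show "V * W' \<in> carrier_mat n n" using cV cW' by simp
    fix i j assume i: "i < n" and j: "j < n"
    have "(V * W') $$ (i, j) = (\<Sum>r = 0..<n. X i ^ r * (A r * X j ^ tau r))"
      using i j unfolding V_def W'_def by (simp add: scalar_prod_def)
    also have "\<dots> = (\<Sum>r<p-1. int (i+1)^r * (U_fun p b c (r+1) * int (j+1)^((2*(p-2) - r) mod (p-1))))"
      unfolding X_def A_def tau_def n_def atLeast0LessThan ..
    finally have e: "(V * W') $$ (i, j) = \<dots>" .
    show "[M $$ (i, j) = (V * W') $$ (i, j)] (mod int p)"
      unfolding e M_def using i j entry_cong[OF p nc, of i j b] unfolding n_def by simp
  qed
  have s2: "det (V * W') = det V * det W'" by (rule det_mult[OF cV cW'])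
  have WDW: "W' = Dg * W"
  proof (rule eq_matI)
    fix r j assume r: "r < dim_row (Dg * W)" and j: "j < dim_col (Dg * W)"
    hence r': "r < n" and j': "j < n" unfolding Dg_def W_def by auto
    have "(Dg * W) $$ (r, j) = (\<Sum>k = 0..<n. (if r = k then A r else 0) * X j ^ tau k)"
      using r' j' unfolding Dg_def W_def by (simp add: scalar_prod_def)
    also have "\<dots> = (\<Sum>k = 0..<n. if k = r then A r * X j ^ tau r else 0)"
      by (rule sum.cong) auto
    also have "\<dots> = A r * X j ^ tau r" using r' by simp
    finally show "W' $$ (r, j) = (Dg * W) $$ (r, j)" using r' j' unfolding W'_def by simp
  qed (auto simp: W'_def Dg_def W_def)
  have detD: "det Dg = (\<Prod>r<n. A r)"
  proof -
    have ut: "upper_triangular Dg" unfolding Dg_def by (rule upper_triangularI) auto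
    have "det Dg = prod_list (diag_mat Dg)" by (rule det_upper_triangular[OF ut cD])
    also have "diag_mat Dg = map A [0..<n]" unfolding diag_mat_def Dg_def by auto
    also have "prod_list (map A [0..<n]) = (\<Prod>r<n. A r)"
      by (simp add: prod.distinct_set_conv_list[symmetric] atLeast0LessThan)
    finally show ?thesis .
  qed
  have s3: "det W' = (\<Prod>r<n. A r) * det W"
    unfolding WDW det_mult[OF cD cW] detD ..
  define Pm where "Pm = mat n n (\<lambda>(r, s). (1\<^sub>m n :: int mat) $$ (pi2 n r, s))"
  have pp: "pi2 n permutes {0..<n}" using pi2_permutes n2 by simp
  have detP: "det Pm = 1"
    unfolding Pm_def det_permute_rows[OF one_carrier_mat pp] using signof_pi2 n2 by simp
  have cP: "Pm \<in> carrier_mat n n" unfolding Pm_def by simp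
  have s4: "[det (W * V) = det ((-1) \<cdot>\<^sub>m Pm)] (mod int p)"
  proof (rule det_cong)
    show "W * V \<in> carrier_mat n n" using cW cV by simp
    show "(-1) \<cdot>\<^sub>m Pm \<in> carrier_mat n n" using cP by simp
    fix r s assume r: "r < n" and s: "s < n"
    have "(W * V) $$ (r, s) = (\<Sum>j = 0..<n. X j ^ tau r * X j ^ s)"
      using r s unfolding W_def V_def by (simp add: scalar_prod_def)
    also have "\<dots> = (\<Sum>j<p-1. (int j + 1) ^ (tau r + s))"
      unfolding X_def n_def atLeast0LessThan by (simp add: power_add ac_simps)
    finally have e: "(W * V) $$ (r, s) = (\<Sum>j<p-1. (int j + 1) ^ (tau r + s))" .
    have pr: "pi2 n r < n" using r unfolding pi2_def by (simp add: n2 less_le_trans[of 0 2 n])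
    have "2 * (p - 2) = 2 * n - 2" unfolding n_def using p3 by simp
    hence tau': "tau r = (2 * n - 2 - r) mod n" unfolding tau_def n_def by simp
    have "((-1) \<cdot>\<^sub>m Pm) $$ (r, s) = (if (p-1) dvd (tau r + s) then -1 else 0)"
      using r s pr tau_dvd[OF n2 r s] unfolding Pm_def tau' n_def[symmetric] by auto
    thus "[(W * V) $$ (r, s) = ((-1) \<cdot>\<^sub>m Pm) $$ (r, s)] (mod int p)"
      unfolding e using power_sum_prime[OF p(1)] by simp
  qed
  have "det ((-1) \<cdot>\<^sub>m Pm) = 1" using detP cP evn by simp
  hence s5: "[det W * det V = 1] (mod int p)" using s4 det_mult[OF cW cV] by simp
  have "det M = det V * ((\<Prod>r<n. A r) * det W) + (det M - det V * det W')"
    using s2 s3 by simp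
  have "[det M = det V * det W'] (mod int p)" using s1 s2 by simp
  hence "[det M = (\<Prod>r<n. A r) * (det W * det V)] (mod int p)" unfolding s3 by (simp add: ac_simps)
  moreover have "[(\<Prod>r<n. A r) * (det W * det V) = (\<Prod>r<n. A r) * 1] (mod int p)"
    using s5 by (intro cong_mult cong_refl)
  ultimately have "[det M = (\<Prod>r<n. A r)] (mod int p)" using cong_trans by fastforce
  thus ?thesis unfolding DM A_def n_def .
qed




lemma Leg_one: "m > 1 \<Longrightarrow> Legendre 1 m = 1"
proof -
  assume m: "m > 1"
  have "\<not> [1 = 0] (mod m)" using m by (auto simp: cong_0_iff zdvd_not_zless)
  moreover have "QuadRes m 1" unfolding QuadRes_def by (rule exI[of _ 1]) simp
  ultimately show ?thesis unfolding Legendre_def by simp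
qed

lemma Leg_prod:
  assumes p: "prime p" "p > 2" and A: "finite A"
  shows "Legendre (\<Prod>x\<in>A. f x) (int p) = (\<Prod>x\<in>A. Legendre (f x) (int p))"
  using A
proof (induction A rule: finite_induct)
  case empty then show ?case using p by (simp add: Leg_one)
next
  case (insert x F)
  then show ?case by (simp add: Leg_mult[OF p])
qed

lemma Leg_pow:
  assumes p: "prime p" "p > 2"
  shows "Legendre (a ^ k) (int p) = Legendre a (int p) ^ k"
  using Leg_prod[OF p, of "{..<k}" "\<lambda>_. a"] by simp

lemma Leg_cube: "Legendre a m ^ 3 = Legendre a m"
  using Leg_values[of a m] by (auto simp: power3_eq_cube)


lemma exp_even:
  fixes m :: nat
  assumes m: "m \<ge> 1"
  shows "(2*m) * (2*m - 2) div 8 + (\<Sum>k\<in>{1..m-1}. 2*m - k) = (m - 1) * (2 * m)"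
proof -
  have G0: "(\<Sum>k\<in>{1..m-1}. k) = (\<Sum>k\<in>{0..m-1}. k)"
    using sum_shift_lb_Suc0_0[of "\<lambda>k. k" "m-1"] by simp
  have G: "(\<Sum>k\<in>{1..m-1}. k) = (m - 1) * m div 2"
    unfolding G0 using gauss_sum_nat[of "m-1"] m by (simp add: mult.commute)
  have e1: "(2*m) * (2*m - 2) div 8 = (m - 1) * m div 2"
  proof -
    obtain k where k: "m = Suc k" using m by (cases m) auto
    have a: "(2*m) * (2*m - 2) = (k * (k+1)) * 4" by (simp add: k algebra_simps)
    have b: "(m - 1) * m = k * (k+1)" by (simp add: k)
    have c: "x * 4 div 8 = x div 2" for x :: nat by presburger
    show ?thesis unfolding a b c ..
  qed
  have "(\<Sum>k\<in>{1..m-1}. 2*m - k) + (\<Sum>k\<in>{1..m-1}. k) = (\<Sum>k\<in>{1..m-1}. 2*m)"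
    by (subst sum.distrib[symmetric]) (rule sum.cong, auto)
  also have "\<dots> = (m - 1) * (2 * m)" by simp
  finally show ?thesis unfolding e1 G[symmetric] by simp
qed

theorem lemma4p3:
  fixes p :: nat and b c :: int
  assumes "prime p" and "odd p" and "\<not> int p dvd c * (b^2 - 4*c)"
  shows "((\<exists>k\<in>{2..p-2}. [U_fun p b c k = 0] (mod int p)) \<longrightarrow>
            Legendre (D_det p b c) (int p) = 0)
       \<and> ((\<forall>k\<in>{2..p-2}. \<not> [U_fun p b c k = 0] (mod int p)) \<longrightarrow>
            (Legendre c (int p)) ^ ((p - 1) * (p - 3) div 8) * Legendre (D_det p b c) (int p)
            = Legendre (4*c - b^2 + 2*c * Legendre (b^2 - 4*c) (int p)) (int p)
              * Legendre (2*c * lucas_u (-b) c (p - 1) - b) (int p)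
              * Legendre (U_fun p b c (p - 2) * U_fun p b c ((p - 1) div 2)) (int p))"
proof -
  note p = assms(1,2)
  have pr: "prime (int p)" using p by simp
  have nc: "\<not> int p dvd c" and nD: "\<not> int p dvd (b^2 - 4*c)"
    using assms(3) prime_dvd_mult_iff[OF pr] by auto
  have p1: "p > 1" using p prime_gt_1_nat by blast
  have p2: "p > 2" using p1 p(2) by (cases "p = 2") auto
  define L where "L x = Legendre x (int p)" for x
  define U where "U k = U_fun p b c k" for k
  define T where "T = Polynomial.coeff ([:c, b, 1:] ^ (p-2)) (p-2)"
  have DC: "[D_det p b c = (\<Prod>r<p-1. U (r+1))] (mod int p)"
    using D_cong[OF p nc] unfolding U_def .
  show ?thesis
  proof (intro conjI impI)
    assume "\<exists>k\<in>{2..p-2}. [U_fun p b c k = 0] (mod int p)"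
    then obtain k where k: "k \<in> {2..p-2}" "int p dvd U k" unfolding U_def by (auto simp: cong_0_iff)
    have "U k dvd (\<Prod>r<p-1. U (r+1))"
    proof -
      have "k - 1 \<in> {..<p-1}" using k(1) by auto
      hence "U (k - 1 + 1) dvd (\<Prod>r<p-1. U (r+1))" by (rule dvd_prodI[OF finite_lessThan])
      thus ?thesis using k(1) by simp
    qed
    hence "int p dvd (\<Prod>r<p-1. U (r+1))" using k(2) dvd_trans by blast
    hence "[D_det p b c = 0] (mod int p)" using DC by (simp add: cong_0_iff cong_dvd_iff)
    thus "Legendre (D_det p b c) (int p) = 0" by (simp add: Leg_zero_iff)
  next
    assume H: "\<forall>k\<in>{2..p-2}. \<not> [U_fun p b c k = 0] (mod int p)"
    define m where "m = (p - 1) div 2"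
    have pm: "p = 2 * m + 1" unfolding m_def using p(2) by simp
    have m1: "m \<ge> 1" using p2 pm by simp
    have Lsq: "L x * L x = 1" if "\<not> [x = 0] (mod int p)" for x
      unfolding L_def using Leg_sq_nz[OF that] .
    have LH: "L (U k) * L (U k) = 1" if "k \<in> {2..p-2}" for k
      using Lsq H that unfolding U_def by blast
    have LD: "L (D_det p b c) = (\<Prod>r<p-1. L (U (r+1)))"
      unfolding L_def using Leg_cong[OF DC] Leg_prod[OF p(1) p2, of "{..<p-1}" "\<lambda>r. U (r+1)"] by simp
    have "(\<Prod>r<p-1. L (U (r+1))) = L (U (p-1)) * (\<Prod>r<p-2. L (U (r+1)))"
    proof -
      have "p - 1 = Suc (p - 2)" using p2 by simp
      thus ?thesis by (simp add: mult.commute)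
    qed
    also have "(\<Prod>r<p-2. L (U (r+1))) = (\<Prod>k\<in>{1..p-2}. L (U k))"
    proof -
      have "(\<Prod>r<p-2. L (U (r+1))) = (\<Prod>k\<in>Suc ` {..<p-2}. L (U k))"
        by (subst prod.reindex) auto
      thus ?thesis by (simp add: image_Suc_lessThan)
    qed
    also have "(\<Prod>k\<in>{1..p-2}. L (U k)) = (\<Prod>k\<in>{1..m-1}. L (U k)) * L (U m) * (\<Prod>k\<in>{m+1..2*m-1}. L (U k))"
    proof -
      have "{1..p-2} = ({1..m-1} \<union> {m}) \<union> {m+1..2*m-1}" using pm m1 by auto
      moreover have "(\<Prod>k\<in>({1..m-1} \<union> {m}) \<union> {m+1..2*m-1}. L (U k))
          = (\<Prod>k\<in>{1..m-1} \<union> {m}. L (U k)) * (\<Prod>k\<in>{m+1..2*m-1}. L (U k))"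
        by (rule prod.union_disjoint) auto
      moreover have "(\<Prod>k\<in>{1..m-1} \<union> {m}. L (U k)) = (\<Prod>k\<in>{1..m-1}. L (U k)) * (\<Prod>k\<in>{m}. L (U k))"
        by (rule prod.union_disjoint) auto
      ultimately show ?thesis by simp
    qed
    also have "(\<Prod>k\<in>{m+1..2*m-1}. L (U k)) = (\<Prod>k\<in>{1..m-1}. L (U (2*m - k)))"
      by (rule prod.reindex_bij_witness[of _ "\<lambda>k. 2*m - k" "\<lambda>k. 2*m - k"]) auto
    finally have LD2: "L (D_det p b c) = L (U (p-1)) * (L (U m) * (\<Prod>k\<in>{1..m-1}. L (U k) * L (U (2*m - k))))"
      unfolding LD by (simp add: prod.distrib ac_simps)
    have pair: "L (U k) * L (U (2*m - k)) = L c ^ (2*m - k)" if k: "k \<in> {1..m-1}" for k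
    proof -
      have k': "k \<le> p - 1" using k pm by auto
      have e: "p - 1 - k = 2*m - k" using pm by simp
      have "[U k = c^(2*m - k) * U (2*m - k)] (mod int p)"
        using U_sym[OF p(1) nc k'] unfolding U_def e .
      hence "L (U k) = L c ^ (2*m - k) * L (U (2*m - k))"
        unfolding L_def using Leg_cong Leg_mult[OF p(1) p2] Leg_pow[OF p(1) p2] by metis
      moreover have "2*m - k \<in> {2..p-2}" using k pm by auto
      ultimately show ?thesis using LH by (simp add: ac_simps)
    qed
    have "(\<Prod>k\<in>{1..m-1}. L (U k) * L (U (2*m - k))) = (\<Prod>k\<in>{1..m-1}. L c ^ (2*m - k))"
      by (rule prod.cong) (simp_all add: pair)
    also have "\<dots> = L c ^ (\<Sum>k\<in>{1..m-1}. 2*m - k)" by (simp add: power_sum)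
    finally have LD3: "L (D_det p b c) = L (U (p-1)) * L (U m) * L c ^ (\<Sum>k\<in>{1..m-1}. 2*m - k)"
      unfolding LD2 by simp
    have ULT: "U (p-1) = T" unfolding U_def T_def using U_last[of p b c] p2 by simp
    have Lc: "L c * L c = 1" using Lsq nc by (simp add: cong_0_iff)
    have e8: "(p - 1) * (p - 3) div 8 = (2*m) * (2*m - 2) div 8" using pm by simp
    have LHS: "L c ^ ((p - 1) * (p - 3) div 8) * L (D_det p b c) = L T * L (U m)"
    proof -
      have "L c ^ ((p - 1) * (p - 3) div 8) * L (D_det p b c)
          = L c ^ ((2*m) * (2*m - 2) div 8 + (\<Sum>k\<in>{1..m-1}. 2*m - k)) * (L T * L (U m))"
        unfolding LD3 ULT e8 by (simp add: power_add ac_simps)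
      also have "(2*m) * (2*m - 2) div 8 + (\<Sum>k\<in>{1..m-1}. 2*m - k) = 2 * ((m - 1) * m)"
        using exp_even[OF m1] by simp
      also have "L c ^ (2 * ((m - 1) * m)) = 1" using Lc by (simp add: power_mult power2_eq_square)
      finally show ?thesis by simp
    qed
    have R1: "L (4*c - b^2 + 2*c * L (b^2 - 4*c)) = L (- (b^2 - 4*c)) * L (U (p-2))"
      using Leg_cong[OF Upm2_cong[OF p nc]] Leg_mult[OF p(1) p2] unfolding L_def U_def by simp
    have R2: "L (2*c * lucas_u (-b) c (p - 1) - b) = L (- (b^2 - 4*c)) * L T"
      using Leg_cong[OF T_cong[OF p nc]] Leg_mult[OF p(1) p2] unfolding L_def T_def by simp
    have R3: "L (U (p-2) * U m) = L (U (p-2)) * L (U m)"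
      unfolding L_def using Leg_mult[OF p(1) p2] by simp
    have nD': "\<not> [- (b^2 - 4*c) = 0] (mod int p)" unfolding cong_0_iff dvd_minus_iff using nD .
    have LDD: "L (- (b^2 - 4*c)) * L (- (b^2 - 4*c)) = 1" using Lsq[OF nD'] .
    have UU: "L (U (p-2)) * L (U (p-2)) * L (U m) = L (U m)"
    proof (cases "p = 3")
      case True
      hence "p - 2 = m" using pm by simp
      thus ?thesis using Leg_cube[of "U m" "int p"] unfolding L_def by (simp add: power3_eq_cube)
    next
      case False
      hence "p - 2 \<in> {2..p-2}" using p2 by auto
      thus ?thesis using LH by simp
    qed
    have "L (4*c - b^2 + 2*c * L (b^2 - 4*c)) * L (2*c * lucas_u (-b) c (p - 1) - b) * L (U (p-2) * U m)
        = (L (- (b^2 - 4*c)) * L (- (b^2 - 4*c))) * L T * (L (U (p-2)) * L (U (p-2)) * L (U m))"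
      unfolding R1 R2 R3 by (simp add: ac_simps)
    also have "\<dots> = L T * L (U m)" unfolding LDD UU by simp
    finally have RHS: "L (4*c - b^2 + 2*c * L (b^2 - 4*c)) * L (2*c * lucas_u (-b) c (p - 1) - b) * L (U (p-2) * U m)
        = L T * L (U m)" .
    show "(Legendre c (int p)) ^ ((p - 1) * (p - 3) div 8) * Legendre (D_det p b c) (int p)
            = Legendre (4*c - b^2 + 2*c * Legendre (b^2 - 4*c) (int p)) (int p)
              * Legendre (2*c * lucas_u (-b) c (p - 1) - b) (int p)
              * Legendre (U_fun p b c (p - 2) * U_fun p b c ((p - 1) div 2)) (int p)"
      using LHS RHS unfolding L_def U_def m_def by simp
  qed
qed



end
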